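(* Let $b>0$ be irrational. Then there exist a strictly increasing sequence $(n_p)_{p\ge1}$ in $\mathbb N$ and a sequence $\gamma=(\gamma_n)_{n\ge1}$ of real numbers with $\gamma_{n_p}>0$ for all $p\ge1$, $\gamma_n=0$ for $n\notin J:=\{n_p:p\ge1\}$, $\sum_{n\ge1}n\gamma_n<\infty$, such that $$\sum_{p\ge1}n_p^3\gamma_{n_p}=\infty\qquad\text{and}\qquad \omega_{n_p}(\gamma)\in b\mathbb Z\ \ \forall p\ge1,$$ where $\omega_n(\gamma):=n^2-2\sum_{k=1}^nk\gamma_k-2n\sum_{k>n}\gamma_k$. Consequently every $u_0$ in the (nonempty) set $\mathrm{Iso}_\gamma:=\{u\in L^2_{r,0}:\gamma_n(u)=\gamma_n\ \forall n\ge1\}$ does not belong to $H^1_{r,0}$, and the solution $t\mapsto\mathcal S(t)u_0$ of the BO equation is periodic in time with period $T=2\pi/b$; thus $\mathrm{Iso}_\gamma$ is entirely filled with $T$-periodic solutions that are not finite gap solutions.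
   Context: $\mathbb T=\mathbb R/2\pi\mathbb Z$. For $s\in\mathbb R$, $H^s_{r,0}$ is the Sobolev space of real-valued distributions on $\mathbb T$ of $H^s$-regularity with zero mean; $L^2_{r,0}=H^0_{r,0}$. The Benjamin–Ono (BO) equation is $\partial_tu=H\partial_x^2u-\partial_x(u^2)$, $H$ the Hilbert transform (Fourier multiplier $-i\,\mathrm{sign}(n)$, zero at $n=0$). For $\sigma\in\mathbb R$, $h^\sigma_+$ is the space of complex sequences $(z_n)_{n\ge1}$ with $\sum n^{2\sigma}|z_n|^2<\infty$. Known facts taken as given: for every $s>-1/2$ the BO equation is globally well posed in $H^s_{r,0}$ with continuous solution map $\mathcal S(t)$; there is a map $\Phi:u\mapsto(\zeta_n(u))_{n\ge1}$ which for every $s>-1/2$ is a homeomorphism $H^s_{r,0}\to h^{s+1/2}_+$ (so $u\in H^s_{r,0}$ iff $\Phi(u)\in h^{s+1/2}_+$), with $\zeta_n(\mathcal S(t)u)=e^{i\omega_nt}\zeta_n(u)$, $\omega_n=n^2-2\sum_{k=1}^nk|\zeta_k(u)|^2-2n\sum_{k>n}|\zeta_k(u)|^2$. The actions are $\gamma_n(u):=|\zeta_n(u)|^2$. A finite gap solution is one whose initial datum $u_0$ has $\zeta_n(u_0)=0$ for all sufficiently large $n$. *)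

theory Defs
  imports "HOL-Analysis.Analysis"
begin

text \<open>Real zero-mean distributions on the torus are represented by their Fourier
  coefficients of positive index: u = sum over n of u_n e^{inx}, with u_{-n} the conjugate
  of u_n and u_0 = 0. So an element is a map nat to complex with value 0 at index 0.\<close>

definition Hs :: "real \<Rightarrow> (nat \<Rightarrow> complex) set" where
  "Hs s = {u. u 0 = 0 \<and> summable (\<lambda>n. (real n) powr (2 * s) * (cmod (u n))\<^sup>2)}"

definition hp :: "real \<Rightarrow> (nat \<Rightarrow> complex) set" where
  "hp \<sigma> = {z. z 0 = 0 \<and> summable (\<lambda>n. (real n) powr (2 * \<sigma>) * (cmod (z n))\<^sup>2)}"

definition omega :: "(nat \<Rightarrow> real) \<Rightarrow> nat \<Rightarrow> real" where
  "omega \<gamma> n = (real n)\<^sup>2 - 2 * (\<Sum>k=1..n. real k * \<gamma> k)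
                 - 2 * real n * infsum \<gamma> {n<..}"

text \<open>Actions gamma_n(u) = |zeta_n(u)|^2 given the Birkhoff map Phi.\<close>
definition actions :: "((nat \<Rightarrow> complex) \<Rightarrow> (nat \<Rightarrow> complex)) \<Rightarrow> (nat \<Rightarrow> complex) \<Rightarrow> nat \<Rightarrow> real" where
  "actions \<Phi> u n = (cmod (\<Phi> u n))\<^sup>2"

definition Iso :: "((nat \<Rightarrow> complex) \<Rightarrow> (nat \<Rightarrow> complex)) \<Rightarrow> (nat \<Rightarrow> real) \<Rightarrow> (nat \<Rightarrow> complex) set" where
  "Iso \<Phi> \<gamma> = {u \<in> Hs 0. \<forall>n\<ge>1. actions \<Phi> u n = \<gamma> n}"

definition finite_gap :: "((nat \<Rightarrow> complex) \<Rightarrow> (nat \<Rightarrow> complex)) \<Rightarrow> (nat \<Rightarrow> complex) \<Rightarrow> bool" where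
  "finite_gap \<Phi> u \<longleftrightarrow> (\<exists>N. \<forall>n\<ge>N. \<Phi> u n = 0)"

end

theory Submission
  imports Defs
begin



lemma dir_approx:
  fixes b :: real and N :: nat
  assumes "b > 0" "N > 0"
  obtains h :: int and p :: int where "0 < h" "h \<le> int N" "\<bar>of_int h - b * of_int p\<bar> < b / N"
proof -
  obtain p h where h: "0 < h" "h \<le> int N" "\<bar>of_int h * (1/b) - of_int p\<bar> < 1/N"
    using Dirichlet_approx[OF assms(2), of "1/b"] by blast
  have e: "of_int h - b * of_int p = b * (of_int h * (1/b) - of_int p)"
    using assms(1) by (simp add: field_simps)
  have "\<bar>of_int h - b * of_int p\<bar> = b * \<bar>of_int h * (1/b) - of_int p\<bar>"
    unfolding e using assms(1) by (simp add: abs_mult)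
  also have "\<dots> < b * (1/N)" using h(3) assms(1) by (intro mult_strict_left_mono) auto
  finally show ?thesis using h that by auto
qed



lemma floor_eq_close:
  fixes x y :: real
  assumes "\<lfloor>x\<rfloor> = \<lfloor>y\<rfloor>" shows "\<bar>x - y\<bar> < 1"
  using assms by linarith

lemma mod_rep:
  fixes x b :: real assumes "b > 0"
  shows "0 \<le> x - b * \<lfloor>x / b\<rfloor>" "x - b * \<lfloor>x / b\<rfloor> < b"
proof -
  have a: "of_int \<lfloor>x / b\<rfloor> \<le> x / b" "x / b < of_int \<lfloor>x / b\<rfloor> + 1" by linarith+
  from mult_left_mono[OF a(1), of b] assms have "b * \<lfloor>x / b\<rfloor> \<le> x" by auto
  then show "0 \<le> x - b * \<lfloor>x / b\<rfloor>" by simp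
  from mult_strict_left_mono[OF a(2) assms] assms have "x < b * (\<lfloor>x / b\<rfloor> + 1)" by auto
  then show "x - b * \<lfloor>x / b\<rfloor> < b" by (simp add: algebra_simps)
qed

lemma small_square:
  fixes b \<epsilon> :: real
  assumes b: "b > 0" and e: "\<epsilon> > 0"
  shows "\<exists>n::nat. n \<ge> 1 \<and> (\<exists>m::int. \<bar>(real n)^2 - b * m\<bar> < \<epsilon>)"
proof -
  define K :: nat where "K = nat \<lceil>2*b/\<epsilon>\<rceil> + 1"
  have K1: "K \<ge> 1" by (simp add: K_def)
  have "2*b/\<epsilon> < K" unfolding K_def by linarith
  hence "2*b < K * \<epsilon>" using e by (simp add: field_simps)
  hence Kb: "b / K < \<epsilon>/2" using K1 by (simp add: field_simps)
  define Q :: nat where "Q = nat \<lceil>4*b*K*K/\<epsilon>\<rceil> + 1"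
  have Q1: "Q \<ge> 1" by (simp add: Q_def)
  have "4*b*K*K/\<epsilon> < Q" unfolding Q_def by linarith
  hence "4*b*K*K < Q * \<epsilon>" using e by (simp add: field_simps)
  hence Qb: "2*b*K*K/Q < \<epsilon>/2" using Q1 by (simp add: field_simps)
  have "\<forall>j. \<exists>hh pp. 0 < hh \<and> hh \<le> int (Q^(j+1)) \<and> \<bar>of_int hh - b * of_int pp\<bar> < b / (Q^(j+1))"
  proof
    fix j
    have "Q^(j+1) > 0" using Q1 by simp
    from dir_approx[OF b this] show "\<exists>hh pp. 0 < hh \<and> hh \<le> int (Q^(j+1)) \<and> \<bar>of_int hh - b * of_int pp\<bar> < b / (Q^(j+1))"
      by (metis of_nat_power)
  qed
  then obtain h p where hp: "\<And>j. 0 < h j" "\<And>j. h j \<le> int (Q^(j+1))"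
       "\<And>j. \<bar>of_int (h j) - b * of_int (p j)\<bar> < b / (Q^(j+1))"
    by metis
  define r where "r j = (of_int (h j))^2 - b * \<lfloor>(of_int (h j))^2 / b\<rfloor>" for j
  define R where "R k = (\<Sum>i<k. r i)" for k
  define g where "g k = R k - b * \<lfloor>R k / b\<rfloor>" for k
  define bx where "bx k = nat \<lfloor>g k * K / b\<rfloor>" for k
  have g_bd: "0 \<le> g k" "g k < b" for k unfolding g_def using mod_rep[OF b] by auto
  have bx_in: "bx k \<in> {0..<K}" for k
  proof -
    have "0 \<le> g k * K / b" using g_bd b by simp
    moreover have "g k * K / b < K" using g_bd b K1 by (simp add: field_simps)
    ultimately show ?thesis unfolding bx_def by (simp add: nat_less_iff floor_less_iff)
  qed
  have "card (bx ` {0..K}) \<le> card {0..<K}"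
    by (rule card_mono) (use bx_in in auto)
  hence "card (bx ` {0..K}) < card {0..K}" by simp
  hence "\<not> inj_on bx {0..K}" using pigeonhole by blast
  then obtain a c where ac: "a \<in> {0..K}" "c \<in> {0..K}" "a \<noteq> c" "bx a = bx c"
    unfolding inj_on_def by blast
  define k1 where "k1 = min a c"
  define k2 where "k2 = max a c"
  have k12: "k1 < k2" "k2 \<le> K" "bx k1 = bx k2" using ac unfolding k1_def k2_def by auto
  have gclose: "\<bar>g k2 - g k1\<bar> < b / K"
  proof -
    have "\<lfloor>g k2 * K / b\<rfloor> = \<lfloor>g k1 * K / b\<rfloor>"
      using k12(3) g_bd b unfolding bx_def by (simp add: nat_eq_iff2)
    hence "\<bar>g k2 * K / b - g k1 * K / b\<bar> < 1" by (rule floor_eq_close)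
    hence "\<bar>(g k2 - g k1) * (K / b)\<bar> < 1" by (simp add: algebra_simps)
    hence "\<bar>g k2 - g k1\<bar> * (K / b) < 1" using b by (simp add: abs_mult)
    thus ?thesis using b K1 by (simp add: field_simps)
  qed
  define HH where "HH k = (\<Sum>i\<in>{k1..<k}. h i)" for k
  have HH_nonneg: "0 \<le> HH k" for k unfolding HH_def using hp(1) by (simp add: sum_nonneg less_imp_le)
  have HH_bd: "HH k \<le> int K * int Q ^ k" if "k \<le> K" for k
  proof -
    have "HH k \<le> (\<Sum>i\<in>{k1..<k}. int Q ^ k)"
      unfolding HH_def
    proof (rule sum_mono)
      fix i assume "i \<in> {k1..<k}"
      hence "i + 1 \<le> k" by auto
      hence "int Q ^ (i+1) \<le> int Q ^ k" using Q1 by (intro power_increasing) auto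
      thus "h i \<le> int Q ^ k" using hp(2)[of i] by simp
    qed
    also have "\<dots> = int (k - k1) * int Q ^ k" by simp
    also have "\<dots> \<le> int K * int Q ^ k" using that by (intro mult_right_mono) auto
    finally show ?thesis .
  qed
  have claim: "k1 + d \<le> K \<longrightarrow> (\<exists>M::int. \<bar>(of_int (HH (k1+d)))^2 - b * M - (R (k1+d) - R k1)\<bar> \<le> 2*b*K*d/Q)" for d
  proof (induction d)
    case 0
    show ?case by (auto simp: HH_def intro!: exI[of _ 0])
  next
    case (Suc d)
    show ?case
    proof
      assume le: "k1 + Suc d \<le> K"
      then obtain M :: int where M: "\<bar>(of_int (HH (k1+d)))^2 - b * M - (R (k1+d) - R k1)\<bar> \<le> 2*b*K*d/Q"
        using Suc by auto
      define k where "k = k1 + d"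
      define H where "H = HH k"
      have Hs: "HH (k1 + Suc d) = H + h k" unfolding H_def HH_def k_def by simp
      have Rs: "R (k1 + Suc d) = R k + r k" unfolding R_def k_def by simp
      define \<delta> where "\<delta> = of_int (h k) - b * of_int (p k)"
      define M' :: int where "M' = M + 2 * H * p k + \<lfloor>(of_int (h k))^2 / b\<rfloor>"
      have eq: "(of_int (HH (k1+Suc d)))^2 - b * M' - (R (k1+Suc d) - R k1)
              = ((of_int H)^2 - b * M - (R k - R k1)) + 2 * of_int H * \<delta>"
        unfolding Hs Rs M'_def \<delta>_def r_def by (simp add: power2_eq_square algebra_simps)
      have Hb: "real_of_int H \<le> real K * real Q ^ k"
        using HH_bd[of k] le unfolding H_def k_def by (metis of_int_le_iff of_int_of_nat_eq of_int_mult of_int_power Suc_le_eq less_imp_le_nat add_Suc_right)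
      have H0: "0 \<le> real_of_int H" using HH_nonneg unfolding H_def by simp
      have "\<bar>2 * of_int H * \<delta>\<bar> = 2 * of_int H * \<bar>\<delta>\<bar>" using H0 by (simp add: abs_mult)
      also have "\<dots> \<le> 2 * (real K * real Q ^ k) * (b / Q^(k+1))"
        using hp(3)[of k] Hb H0 unfolding \<delta>_def
        by (intro mult_mono) auto
      also have "\<dots> = 2*b*K/Q" using Q1 by (simp add: field_simps)
      finally have e2: "\<bar>2 * of_int H * \<delta>\<bar> \<le> 2*b*K/Q" .
      have "\<bar>(of_int (HH (k1+Suc d)))^2 - b * M' - (R (k1+Suc d) - R k1)\<bar> \<le> 2*b*K*d/Q + 2*b*K/Q"
        unfolding eq using M e2 unfolding H_def k_def by linarith
      also have "\<dots> = 2*b*K*(Suc d)/Q" by (simp add: add_divide_distrib[symmetric] algebra_simps)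
      finally show "\<exists>M::int. \<bar>(of_int (HH (k1+Suc d)))^2 - b * M - (R (k1+Suc d) - R k1)\<bar> \<le> 2*b*K*(Suc d)/Q"
        by blast
    qed
  qed
  obtain M :: int where M: "\<bar>(of_int (HH k2))^2 - b * M - (R k2 - R k1)\<bar> \<le> 2*b*K*(k2-k1)/Q"
    using claim[of "k2 - k1"] k12 by auto
  have "2*b*K*(k2-k1)/Q \<le> 2*b*K*K/Q"
    using k12 b by (intro divide_right_mono mult_left_mono) auto
  hence Mb: "\<bar>(of_int (HH k2))^2 - b * M - (R k2 - R k1)\<bar> < \<epsilon>/2" using M Qb by linarith
  define M2 where "M2 = M + \<lfloor>R k2 / b\<rfloor> - \<lfloor>R k1 / b\<rfloor>"
  have eq2: "(of_int (HH k2))^2 - b * M2 = ((of_int (HH k2))^2 - b * M - (R k2 - R k1)) + (g k2 - g k1)"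
    unfolding M2_def g_def by (simp add: algebra_simps)
  have fin: "\<bar>(of_int (HH k2))^2 - b * M2\<bar> < \<epsilon>"
    unfolding eq2 using Mb gclose Kb by linarith
  have "h k1 \<le> HH k2" unfolding HH_def
    by (rule member_le_sum) (use k12 hp(1) in \<open>auto intro: less_imp_le\<close>)
  hence pos: "HH k2 \<ge> 1" using hp(1)[of k1] by linarith
  show ?thesis
    by (rule exI[of _ "nat (HH k2)"]) (use pos fin in \<open>auto intro!: exI[of _ M2]\<close>)
qed



lemma hit_pos:
  fixes b c \<epsilon> y :: real and M :: nat
  assumes b: "b > 0" and c: "c > 0" "c < 1" "c < \<epsilon>/2"
    and cB: "c * ((real M + 1)^2 + 1 + b) < \<epsilon>^2/16" and e: "\<epsilon> > 0"
  shows "\<exists>k::nat. k > M + 1 \<and> (\<exists>t::int. y < (real k)^2 * c + b * t \<and> (real k)^2 * c + b * t < y + \<epsilon>)"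
proof -
  define A0 where "A0 = (real M + 1)^2 + 1"
  define t0 where "t0 = \<lceil>(A0 - y) / b\<rceil>"
  define x' where "x' = y + b * t0"
  have "(A0 - y)/b \<le> t0" unfolding t0_def by linarith
  hence x1: "A0 \<le> x'" using b unfolding x'_def by (simp add: field_simps)
  have "t0 < (A0 - y)/b + 1" unfolding t0_def by linarith
  hence x2: "x' < A0 + b" using b unfolding x'_def by (simp add: field_simps)
  have A0pos: "A0 > 0" unfolding A0_def by (simp add: add_pos_nonneg)
  define P where "P k = (x' < (real k)^2 * c)" for k :: nat
  define k0 :: nat where "k0 = nat \<lceil>x'/c\<rceil> + 1"
  have "P k0"
  proof -
    have "x'/c < k0" unfolding k0_def by linarith
    hence "x' < k0 * c" using c by (simp add: field_simps)
    also have "\<dots> \<le> (real k0)^2 * c" using c by (intro mult_right_mono) (auto simp: power2_eq_square k0_def)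
    finally show ?thesis unfolding P_def .
  qed
  define k where "k = (LEAST k. P k)"
  have Pk: "P k" unfolding k_def by (rule LeastI[of P, OF \<open>P k0\<close>])
  have k_gt: "k > M + 1"
  proof (rule ccontr)
    assume "\<not> k > M + 1"
    hence "real k \<le> real M + 1" by simp
    hence "(real k)^2 \<le> (real M + 1)^2" by (intro power_mono) auto
    hence "(real k)^2 * c \<le> (real M + 1)^2 * c" using c by (intro mult_right_mono) auto
    also have "\<dots> \<le> (real M + 1)^2" using c by (simp add: mult_left_le)
    also have "\<dots> < A0" unfolding A0_def by simp
    finally show False using Pk x1 unfolding P_def by simp
  qed
  have notP: "\<not> P (k - 1)" unfolding k_def
    by (rule not_less_Least) (use k_gt in \<open>simp add: k_def[symmetric]\<close>)
  define j where "j = k - 1"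
  have kj: "real k = real j + 1" unfolding j_def using k_gt by auto
  have j1: "(real j)^2 * c \<le> x'" using notP unfolding P_def j_def by simp
  have "((real j) * c)^2 = ((real j)^2 * c) * c" by (simp add: power2_eq_square)
  also have "\<dots> \<le> x' * c" using j1 c by (intro mult_right_mono) auto
  also have "\<dots> < (A0 + b) * c" using x2 c by (intro mult_strict_right_mono) auto
  also have "\<dots> < \<epsilon>^2/16" using cB unfolding A0_def by (simp add: algebra_simps)
  finally have sq: "((real j) * c)^2 < (\<epsilon>/4)^2" by (simp add: power_divide)
  have jc: "real j * c < \<epsilon>/4"
  proof (rule ccontr)
    assume "\<not> real j * c < \<epsilon>/4"
    hence "\<epsilon>/4 \<le> real j * c" by simp
    hence "(\<epsilon>/4)^2 \<le> (real j * c)^2" using e by (intro power_mono) auto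
    thus False using sq by simp
  qed
  have "(real k)^2 * c = (real j)^2 * c + 2 * (real j * c) + c" unfolding kj by (simp add: power2_eq_square algebra_simps)
  hence up: "(real k)^2 * c < x' + \<epsilon>" using j1 jc c by linarith
  show ?thesis
  proof (intro exI conjI)
    show "k > M + 1" by (rule k_gt)
    show "y < (real k)^2 * c + b * of_int (- t0)" using Pk unfolding P_def x'_def by simp
    show "(real k)^2 * c + b * of_int (- t0) < y + \<epsilon>" using up unfolding x'_def by simp
  qed
qed



lemma density:
  fixes b \<epsilon> x :: real and M :: nat
  assumes b: "b > 0" "b \<notin> \<rat>" and e: "\<epsilon> > 0"
  shows "\<exists>N::nat. N > M \<and> (\<exists>m::int. x < (real N)^2 - b * m \<and> (real N)^2 - b * m < x + \<epsilon>)"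
proof -
  define B where "B = (real M + 1)^2 + 1 + b"
  have B0: "B > 0" unfolding B_def using b by (simp add: add_pos_nonneg)
  define \<delta> where "\<delta> = min 1 (min (\<epsilon>/2) (\<epsilon>^2/(16*B)))"
  have d0: "\<delta> > 0" unfolding \<delta>_def using e B0 by simp
  obtain n :: nat and m0 :: int where n: "n \<ge> 1" "\<bar>(real n)^2 - b * m0\<bar> < \<delta>"
    using small_square[OF b(1) d0] by blast
  define c where "c = (real n)^2 - b * m0"
  have cd: "\<bar>c\<bar> < 1" "\<bar>c\<bar> < \<epsilon>/2" "\<bar>c\<bar> < \<epsilon>^2/(16*B)" using n(2) unfolding c_def \<delta>_def by auto
  have cB: "\<bar>c\<bar> * B < \<epsilon>^2/16" using cd(3) B0 by (simp add: field_simps)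
  have c0: "c \<noteq> 0"
  proof
    assume "c = 0"
    hence eq: "(real n)^2 = b * m0" unfolding c_def by simp
    have "(real n)^2 > 0" using n(1) by simp
    hence "m0 \<noteq> 0" using eq by auto
    hence "b = (real n)^2 / of_int m0" using eq by (simp add: field_simps)
    hence "b \<in> \<rat>" by simp
    thus False using b(2) by simp
  qed
  have sq: "(real (k * n))^2 = (real k)^2 * c + b * (of_int (int k^2 * m0))" for k :: nat
    unfolding c_def by (simp add: power_mult_distrib algebra_simps)
  show ?thesis
  proof (cases "c > 0")
    case True
    obtain k :: nat and t :: int where k: "k > M + 1" "x < (real k)^2 * c + b * t" "(real k)^2 * c + b * t < x + \<epsilon>"
      using hit_pos[OF b(1) True, of \<epsilon> M x] cd cB True e unfolding B_def by auto
    have "k * n \<ge> k" using n(1) by simp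
    hence "k * n > M" using k(1) by linarith
    moreover have "(real (k*n))^2 - b * of_int (int k^2 * m0 - t) = (real k)^2 * c + b * t"
      unfolding sq by (simp add: algebra_simps)
    ultimately show ?thesis using k by metis
  next
    case False
    hence cn: "-c > 0" using c0 by simp
    obtain k :: nat and t :: int where k: "k > M + 1" "-x-\<epsilon> < (real k)^2 * (-c) + b * t" "(real k)^2 * (-c) + b * t < -x-\<epsilon> + \<epsilon>"
      using hit_pos[OF b(1) cn, of \<epsilon> M "-x-\<epsilon>"] cd cB cn e unfolding B_def by auto
    have "k * n \<ge> k" using n(1) by simp
    hence "k * n > M" using k(1) by linarith
    moreover have "(real (k*n))^2 - b * of_int (int k^2 * m0 + t) = (real k)^2 * c - b * t"
      unfolding sq by (simp add: algebra_simps)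
    moreover have "x < (real k)^2 * c - b * t" "(real k)^2 * c - b * t < x + \<epsilon>" using k by auto
    ultimately show ?thesis by metis
  qed
qed




lemma step_ex:
  fixes b \<tau> S :: real and n :: nat
  assumes b: "b > 0" "b \<notin> \<rat>" and t: "\<tau> > 0"
  shows "\<exists>n' S'. n' > n \<and> (\<exists>m::int. S' = (real n')^2 - b * m) \<and> S < S' \<and> S' - S \<le> \<tau>
           \<and> 4 \<le> (real n')^2 * (S' - S)"
proof -
  obtain N :: nat and m :: int where N: "N > max n (nat \<lceil>8/\<tau>\<rceil>)"
     "S + \<tau>/2 < (real N)^2 - b * m" "(real N)^2 - b * m < S + \<tau>/2 + \<tau>/2"
    using density[OF b, of "\<tau>/2" "max n (nat \<lceil>8/\<tau>\<rceil>)" "S + \<tau>/2"] t by auto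
  define S' where "S' = (real N)^2 - b * m"
  have "8/\<tau> \<le> real (nat \<lceil>8/\<tau>\<rceil>)" by linarith
  also have "\<dots> < real N" using N(1) by simp
  finally have N8: "8/\<tau> < real N" .
  have N1: "real N \<ge> 1" using N(1) by simp
  have "(real N)^2 \<ge> real N" using N1 by (simp add: power2_eq_square)
  have N2: "8/\<tau> \<le> (real N)^2" using N8 \<open>(real N)^2 \<ge> real N\<close> by linarith
  have "4 = (8/\<tau>) * (\<tau>/2)" using t by simp
  also have "\<dots> \<le> (real N)^2 * (S' - S)"
    using N2 N(2) t unfolding S'_def
    by (intro mult_mono) auto
  finally have "4 \<le> (real N)^2 * (S' - S)" .
  moreover have "N > n" using N(1) by simp
  moreover have "\<exists>m::int. S' = (real N)^2 - b * m" unfolding S'_def by blast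
  moreover have "S < S'" "S' - S \<le> \<tau>" using N(2,3) t unfolding S'_def by auto
  ultimately show ?thesis by blast
qed

lemma construction:
  fixes b :: real
  assumes b: "b > 0" "b \<notin> \<rat>"
  shows "\<exists>(N::nat\<Rightarrow>nat) (Sq::nat\<Rightarrow>real) (\<tau>::nat\<Rightarrow>real).
     N 0 \<ge> 1 \<and> strict_mono N \<and> (\<forall>i. \<exists>m::int. Sq i = (real (N i))^2 - b*m)
   \<and> \<tau> 0 = Sq 0 / (2 * real (N 0)) \<and> Sq 0 > 0
   \<and> (\<forall>i. Sq i < Sq (Suc i) \<and> Sq (Suc i) - Sq i \<le> \<tau> i
          \<and> 4 \<le> (real (N (Suc i)))^2 * (Sq (Suc i) - Sq i)
          \<and> \<tau> (Suc i) = (Sq (Suc i) - Sq i) / (2 * (real (N (Suc i)) - real (N i))))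
   \<and> (\<forall>i. \<tau> i > 0)"
proof -
  define Pr where "Pr = (\<lambda>(x::nat\<times>real\<times>real) (y::nat\<times>real). fst y > fst x
      \<and> (\<exists>m::int. snd y = (real (fst y))^2 - b * m) \<and> fst (snd x) < snd y \<and> snd y - fst (snd x) \<le> snd (snd x)
      \<and> 4 \<le> (real (fst y))^2 * (snd y - fst (snd x)))"
  have "\<forall>x. \<exists>y. snd (snd x) > 0 \<longrightarrow> Pr x y"
  proof
    fix x :: "nat\<times>real\<times>real"
    obtain n S \<tau> where x: "x = (n, S, \<tau>)" by (cases x) auto
    show "\<exists>y. snd (snd x) > 0 \<longrightarrow> Pr x y"
    proof (cases "\<tau> > 0")
      case True
      from step_ex[OF b True, of n S] obtain n' S' where
        "n' > n \<and> (\<exists>m::int. S' = (real n')^2 - b * m) \<and> S < S' \<and> S' - S \<le> \<tau> \<and> 4 \<le> (real n')^2 * (S' - S)"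
        by blast
      thus ?thesis unfolding Pr_def x by (intro exI[of _ "(n', S')"]) auto
    qed (auto simp: x)
  qed
  then obtain F where F: "\<And>x. snd (snd x) > 0 \<Longrightarrow> Pr x (F x)" by metis
  obtain n0 :: nat and m0 :: int where n0: "n0 > 0" "0 < (real n0)^2 - b * m0" "(real n0)^2 - b * m0 < 0 + 1"
    using density[OF b, of 1 0 0] by auto
  define G where "G = (\<lambda>x::nat\<times>real\<times>real. (fst (F x), snd (F x),
       (snd (F x) - fst (snd x)) / (2 * (real (fst (F x)) - real (fst x)))))"
  define S0 where "S0 = (real n0)^2 - b * m0"
  define st where "st i = (G ^^ i) (n0, S0, S0 / (2 * real n0))" for i
  have st0: "st 0 = (n0, S0, S0 / (2 * real n0))" unfolding st_def by simp
  have stS: "st (Suc i) = G (st i)" for i unfolding st_def by simp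
  define N where "N i = fst (st i)" for i
  define Sq where "Sq i = fst (snd (st i))" for i
  define \<tau> where "\<tau> i = snd (snd (st i))" for i
  have tpos: "\<tau> i > 0 \<and> Pr (st i) (F (st i))" for i
  proof (induction i)
    case 0
    have "\<tau> 0 > 0" unfolding \<tau>_def st0 S0_def using n0 by simp
    then show ?case using F[of "st 0"] unfolding \<tau>_def by simp
  next
    case (Suc i)
    have P: "Pr (st i) (F (st i))" using Suc by simp
    have "\<tau> (Suc i) = (snd (F (st i)) - fst (snd (st i))) / (2 * (real (fst (F (st i))) - real (fst (st i))))"
      unfolding \<tau>_def stS G_def by simp
    moreover have "snd (F (st i)) - fst (snd (st i)) > 0" "real (fst (F (st i))) - real (fst (st i)) > 0"
      using P unfolding Pr_def by auto
    ultimately have "\<tau> (Suc i) > 0" by simp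
    then show ?case using F[of "st (Suc i)"] unfolding \<tau>_def by simp
  qed
  have NS: "N (Suc i) = fst (F (st i))" "Sq (Suc i) = snd (F (st i))"
     "\<tau> (Suc i) = (Sq (Suc i) - Sq i) / (2 * (real (N (Suc i)) - real (N i)))" for i
    unfolding N_def Sq_def \<tau>_def stS G_def by simp_all
  have Pi: "Pr (st i) (F (st i))" for i using tpos by simp
  have props: "N (Suc i) > N i" "\<exists>m::int. Sq (Suc i) = (real (N (Suc i)))^2 - b * m"
     "Sq i < Sq (Suc i)" "Sq (Suc i) - Sq i \<le> \<tau> i" "4 \<le> (real (N (Suc i)))^2 * (Sq (Suc i) - Sq i)" for i
    using Pi[of i] unfolding Pr_def N_def Sq_def \<tau>_def stS G_def by auto
  have sm: "strict_mono N" using props(1) by (rule strict_mono_Suc_iff[THEN iffD2, rule_format])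
  have mrep: "\<exists>m::int. Sq i = (real (N i))^2 - b*m" for i
  proof (cases i)
    case 0 thus ?thesis by (auto simp: Sq_def N_def st0 S0_def)
  next
    case (Suc j) thus ?thesis using props(2)[of j] by simp
  qed
  show ?thesis
    apply (rule exI[of _ N], rule exI[of _ Sq], rule exI[of _ \<tau>])
    using n0 sm mrep props(3,4,5) NS(3) tpos
    by (auto simp: N_def Sq_def \<tau>_def st0 S0_def)
qed



theorem theorem3p1:
  fixes b :: real
    and \<Phi> :: "(nat \<Rightarrow> complex) \<Rightarrow> (nat \<Rightarrow> complex)"
    and S :: "real \<Rightarrow> (nat \<Rightarrow> complex) \<Rightarrow> (nat \<Rightarrow> complex)"
  assumes b_pos: "b > 0"
    and b_irrat: "b \<notin> \<rat>"
    and Phi_bij: "\<And>s. s > -1/2 \<Longrightarrow> bij_betw \<Phi> (Hs s) (hp (s + 1/2))"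
    and S_wp: "\<And>s t u. s > -1/2 \<Longrightarrow> u \<in> Hs s \<Longrightarrow> S t u \<in> Hs s"
    and S_Phi: "\<And>s t u n. s > -1/2 \<Longrightarrow> u \<in> Hs s \<Longrightarrow> n \<ge> 1 \<Longrightarrow>
                  \<Phi> (S t u) n = exp (\<i> * complex_of_real (omega (actions \<Phi> u) n * t)) * \<Phi> u n"
  shows "\<exists>(np :: nat \<Rightarrow> nat) (\<gamma> :: nat \<Rightarrow> real).
           strict_mono_on {1..} np
         \<and> (\<forall>p\<ge>1. np p \<ge> 1 \<and> \<gamma> (np p) > 0)
         \<and> (\<forall>n\<ge>1. n \<notin> np ` {1..} \<longrightarrow> \<gamma> n = 0)
         \<and> summable (\<lambda>n. real n * \<gamma> n)
         \<and> \<not> ((\<lambda>p. (real (np p))^3 * \<gamma> (np p)) summable_on {1..})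
         \<and> (\<forall>p\<ge>1. \<exists>m::int. omega \<gamma> (np p) = b * of_int m)
         \<and> Iso \<Phi> \<gamma> \<noteq> {}
         \<and> (\<forall>u0 \<in> Iso \<Phi> \<gamma>. u0 \<notin> Hs 1
               \<and> (\<forall>t. S (t + 2 * pi / b) u0 = S t u0)
               \<and> \<not> finite_gap \<Phi> u0)"
  proof -
  obtain N Sq \<tau> where N0: "N 0 \<ge> 1" and sm: "strict_mono N"
    and mrep: "\<And>i. \<exists>m::int. Sq i = (real (N i))^2 - b*m"
    and t0: "\<tau> 0 = Sq 0 / (2 * real (N 0))" and S0: "Sq 0 > 0"
    and inc: "\<And>i. Sq i < Sq (Suc i)" and incb: "\<And>i. Sq (Suc i) - Sq i \<le> \<tau> i"
    and four: "\<And>i. 4 \<le> (real (N (Suc i)))^2 * (Sq (Suc i) - Sq i)"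
    and tS: "\<And>i. \<tau> (Suc i) = (Sq (Suc i) - Sq i) / (2 * (real (N (Suc i)) - real (N i)))"
    and tpos: "\<And>i. \<tau> i > 0"
    using construction[OF b_pos b_irrat] by metis
  have inj: "inj N" using sm by (rule strict_mono_imp_inj_on)
  have Nmono: "N i \<le> N j" if "i \<le> j" for i j using sm that by (simp add: strict_mono_less_eq)
  have Nge: "N i \<ge> 1" for i using Nmono[of 0 i] N0 by simp
  have Nid: "i \<le> N i" for i using sm by (rule strict_mono_imp_increasing)
  have dpos: "real (N (Suc i)) - real (N i) \<ge> 1" for i using sm[unfolded strict_mono_def, rule_format, of i "Suc i"] by simp
  have half: "\<tau> (Suc i) \<le> \<tau> i / 2" for i
  proof -
    have "\<tau> (Suc i) \<le> (Sq (Suc i) - Sq i) / 2"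
      unfolding tS using dpos[of i] inc[of i]
      by (intro divide_left_mono) auto
    thus ?thesis using incb[of i] by simp
  qed
  define G where "G i = \<tau> i - \<tau> (Suc i)" for i
  have Gge: "G i \<ge> \<tau> i / 2" for i unfolding G_def using half[of i] by simp
  have Gpos: "G i > 0" for i using Gge[of i] tpos[of i] by linarith
  have tgeo: "\<tau> i \<le> \<tau> 0 * (1/2)^i" for i
  proof (induction i)
    case (Suc i) thus ?case using half[of i] by simp
  qed simp
  have tlim: "\<tau> \<longlonglongrightarrow> 0"
  proof (rule tendsto_sandwich[of "\<lambda>_. 0" _ _ "\<lambda>i. \<tau> 0 * (1/2)^i"])
    show "\<forall>\<^sub>F n in sequentially. 0 \<le> \<tau> n" using tpos by (simp add: less_imp_le)
    show "\<forall>\<^sub>F n in sequentially. \<tau> n \<le> \<tau> 0 * (1/2)^n" using tgeo by simp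
    show "(\<lambda>i. \<tau> 0 * (1/2)^i) \<longlonglongrightarrow> 0"
      by (intro tendsto_mult_right_zero LIMSEQ_realpow_zero) auto
  qed simp
  have Sqb: "Sq i + 2 * \<tau> i \<le> Sq 0 + 2 * \<tau> 0" for i
  proof (induction i)
    case (Suc i) thus ?case using incb[of i] half[of i] by linarith
  qed simp
  have ident: "(\<Sum>j\<le>i. real (N j) * G j) + real (N i) * \<tau> (Suc i) = Sq i / 2" for i
  proof (induction i)
    case 0 thus ?case using t0 N0 unfolding G_def by (simp add: field_simps)
  next
    case (Suc i)
    have d: "(real (N (Suc i)) - real (N i)) * \<tau> (Suc i) = (Sq (Suc i) - Sq i) / 2"
      unfolding tS using dpos[of i] by (simp add: field_simps)
    have "(\<Sum>j\<le>Suc i. real (N j) * G j) + real (N (Suc i)) * \<tau> (Suc (Suc i))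
        = ((\<Sum>j\<le>i. real (N j) * G j) + real (N i) * \<tau> (Suc i))
          + (real (N (Suc i)) - real (N i)) * \<tau> (Suc i)"
      unfolding G_def by (simp add: algebra_simps)
    also have "\<dots> = Sq (Suc i) / 2" using Suc d by (simp add: field_simps)
    finally show ?case .
  qed
  have div: "1 \<le> (real (N (Suc i)))^3 * G (Suc i)" for i
  proof -
    define n where "n = real (N (Suc i))"
    define dS where "dS = Sq (Suc i) - Sq i"
    have n1: "n \<ge> 1" unfolding n_def using Nge by simp
    have dS0: "dS > 0" unfolding dS_def using inc by simp
    have "dS / (2 * n) \<le> \<tau> (Suc i)"
      unfolding tS dS_def[symmetric] n_def using dpos[of i] dS0 n1 unfolding n_def
      by (intro divide_left_mono) auto
    hence "dS / (4 * n) \<le> G (Suc i)" using Gge[of "Suc i"] by (simp add: field_simps)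
    hence "n^3 * (dS / (4 * n)) \<le> n^3 * G (Suc i)" using n1 by (intro mult_left_mono) auto
    moreover have "n^3 * (dS / (4 * n)) = n^2 * dS / 4" using n1 by (simp add: field_simps power2_eq_square power3_eq_cube)
    moreover have "n^2 * dS \<ge> 4" using four[of i] unfolding n_def dS_def .
    ultimately show ?thesis unfolding n_def by simp
  qed
  define \<gamma> where "\<gamma> k = (if k \<in> range N then G (inv N k) else 0)" for k
  have \<gamma>N: "\<gamma> (N i) = G i" for i unfolding \<gamma>_def using inj by simp
  have \<gamma>nn: "\<gamma> k \<ge> 0" for k unfolding \<gamma>_def using Gpos by (simp add: less_imp_le)
  have \<gamma>out: "k \<notin> range N \<Longrightarrow> \<gamma> k = 0" for k unfolding \<gamma>_def by simp
  have \<gamma>0: "\<gamma> 0 = 0" using Nge by (intro \<gamma>out) (metis imageE not_one_le_zero)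
  have sumid: "(\<Sum>k\<le>N i. real k * \<gamma> k) = (\<Sum>j\<le>i. real (N j) * G j)" for i
  proof -
    have "(\<Sum>k\<le>N i. real k * \<gamma> k) = (\<Sum>k\<in>N ` {..i}. real k * \<gamma> k)"
    proof (rule sum.mono_neutral_right)
      show "N ` {..i} \<subseteq> {..N i}" using Nmono by auto
      show "\<forall>k\<in>{..N i} - N ` {..i}. real k * \<gamma> k = 0"
      proof
        fix k assume k: "k \<in> {..N i} - N ` {..i}"
        show "real k * \<gamma> k = 0"
        proof (cases "k \<in> range N")
          case True
          then obtain j where j: "k = N j" by auto
          have "j \<le> i" using k j sm by (auto simp: strict_mono_less_eq)
          thus ?thesis using k j by auto
        qed (simp add: \<gamma>out)
      qed
    qed simp
    also have "\<dots> = (\<Sum>j\<le>i. real (N j) * G j)"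
      by (subst sum.reindex) (use inj in \<open>auto simp: \<gamma>N inj_on_def\<close>)
    finally show ?thesis .
  qed
  have tail: "(\<gamma> has_sum \<tau> (Suc i)) {N i<..}" for i
  proof -
    have "(\<lambda>j. \<tau> (j + Suc i)) \<longlonglongrightarrow> 0" using tlim by (rule LIMSEQ_ignore_initial_segment)
    from telescope_sums'[OF this] have "(\<lambda>j. G (j + Suc i)) sums \<tau> (Suc i)"
      unfolding G_def by simp
    hence "((\<lambda>j. G (j + Suc i)) has_sum \<tau> (Suc i)) UNIV"
      using Gpos by (intro sums_nonneg_imp_has_sum) (auto intro: less_imp_le)
    hence "((G \<circ> (\<lambda>j. j + Suc i)) has_sum \<tau> (Suc i)) UNIV" by (simp add: o_def)
    hence "(G has_sum \<tau> (Suc i)) ((\<lambda>j. j + Suc i) ` UNIV)"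
      by (subst has_sum_reindex) (auto simp: inj_on_def)
    moreover have "(\<lambda>j. j + Suc i) ` UNIV = {i<..}"
    proof
      show "{i<..} \<subseteq> (\<lambda>j. j + Suc i) ` UNIV"
      proof
        fix x assume "x \<in> {i<..}"
        hence "x = (x - Suc i) + Suc i" by auto
        thus "x \<in> (\<lambda>j. j + Suc i) ` UNIV" by blast
      qed
    qed auto
    ultimately have "((\<gamma> \<circ> N) has_sum \<tau> (Suc i)) {i<..}"
      by (simp add: o_def \<gamma>N)
    hence "(\<gamma> has_sum \<tau> (Suc i)) (N ` {i<..})"
      by (subst has_sum_reindex) (use inj in \<open>auto simp: inj_on_def\<close>)
    moreover have "(\<gamma> has_sum \<tau> (Suc i)) (N ` {i<..}) \<longleftrightarrow> (\<gamma> has_sum \<tau> (Suc i)) {N i<..}"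
    proof (rule has_sum_cong_neutral)
      fix x assume x: "x \<in> {N i<..} - N ` {i<..}"
      show "\<gamma> x = 0"
      proof (cases "x \<in> range N")
        case True
        then obtain j where j: "x = N j" by auto
        have "i < j" using x j sm by (auto simp: strict_mono_less)
        thus ?thesis using x j by auto
      qed (simp add: \<gamma>out)
    next
      fix x assume "x \<in> N ` {i<..} - {N i<..}"
      thus "\<gamma> x = 0" using sm by (auto simp: strict_mono_less)
    qed simp
    ultimately show ?thesis by simp
  qed
  have omg: "omega \<gamma> (N i) = (real (N i))^2 - Sq i" for i
  proof -
    have "(\<Sum>k=1..N i. real k * \<gamma> k) = (\<Sum>k\<le>N i. real k * \<gamma> k)"
      by (rule sum.mono_neutral_left) auto
    moreover have "infsum \<gamma> {N i<..} = \<tau> (Suc i)" using tail by (rule infsumI)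
    ultimately show ?thesis unfolding omega_def using sumid[of i] ident[of i] by simp
  qed
  have summ: "summable (\<lambda>n. real n * \<gamma> n)"
  proof (rule summableI_nonneg_bounded)
    show "0 \<le> real n * \<gamma> n" for n using \<gamma>nn by simp
    show "(\<Sum>k<n. real k * \<gamma> k) \<le> (Sq 0 + 2 * \<tau> 0) / 2" for n
    proof -
      have "(\<Sum>k<n. real k * \<gamma> k) \<le> (\<Sum>k\<le>N n. real k * \<gamma> k)"
        using Nid[of n] \<gamma>nn by (intro sum_mono2) auto
      also have "\<dots> = Sq n / 2 - real (N n) * \<tau> (Suc n)" using sumid ident[of n] by simp
      also have "\<dots> \<le> Sq n / 2" using tpos[of "Suc n"] by simp
      also have "\<dots> \<le> (Sq 0 + 2 * \<tau> 0) / 2" using Sqb[of n] tpos[of n] by simp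
      finally show ?thesis .
    qed
  qed
  define np where "np p = (if p = 0 then 0 else N (p - 1))" for p
  have npimg: "np ` {1..} = range N"
  proof
    show "range N \<subseteq> np ` {1..}"
    proof
      fix x assume "x \<in> range N"
      then obtain j where "x = N j" by auto
      hence "x = np (Suc j)" unfolding np_def by simp
      thus "x \<in> np ` {1..}" by force
    qed
  qed (auto simp: np_def)
  have npsm: "strict_mono_on {1..} np"
    unfolding strict_mono_on_def np_def using sm by (auto simp: strict_mono_less)
  have npinj: "inj_on np {1..}" using npsm by (rule strict_mono_on_imp_inj_on)
  have np_sub: "p \<ge> 1 \<Longrightarrow> np p = N (p - 1)" for p unfolding np_def by simp
  have A1: "\<forall>p\<ge>1. np p \<ge> 1 \<and> \<gamma> (np p) > 0" using Nge Gpos by (simp add: np_sub \<gamma>N)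
  have A2: "\<forall>n\<ge>1. n \<notin> np ` {1..} \<longrightarrow> \<gamma> n = 0" using \<gamma>out npimg by simp
  have A3: "\<not> ((\<lambda>p. (real (np p))^3 * \<gamma> (np p)) summable_on {1..})"
  proof
    define f where "f p = (real (np p))^3 * \<gamma> (np p)" for p
    assume "(\<lambda>p. (real (np p))^3 * \<gamma> (np p)) summable_on {1..}"
    hence fs: "f summable_on {1..}" unfolding f_def .
    have f0: "f p \<ge> 0" for p unfolding f_def using \<gamma>nn by simp
    have f1: "f p \<ge> 1" if "p \<ge> 2" for p
    proof -
      have "Suc (p - 2) = p - 1" using that by simp
      hence "np p = N (Suc (p - 2))" using that np_sub[of p] by simp
      thus ?thesis unfolding f_def using div[of "p - 2"] \<gamma>N by simp
    qed
    define K where "K = nat \<lceil>infsum f {1..}\<rceil>"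
    have "sum f {2..K+2} \<le> infsum f {1..}"
      by (rule finite_sum_le_infsum[OF fs]) (use f0 in auto)
    moreover have "sum f {2..K+2} \<ge> sum (\<lambda>_. 1::real) {2..K+2}"
      by (rule sum_mono) (use f1 in auto)
    moreover have "sum (\<lambda>_. 1::real) {2..K+2} = real K + 1" by simp
    moreover have "infsum f {1..} \<le> real K" unfolding K_def by linarith
    ultimately show False by linarith
  qed
  have A4: "\<forall>p\<ge>1. \<exists>m::int. omega \<gamma> (np p) = b * of_int m"
  proof (intro allI impI)
    fix p :: nat assume "p \<ge> 1"
    obtain m :: int where "Sq (p-1) = (real (N (p-1)))^2 - b*m" using mrep by metis
    hence "omega \<gamma> (np p) = b * of_int m" using omg[of "p-1"] np_sub[OF \<open>p \<ge> 1\<close>] by simp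
    thus "\<exists>m::int. omega \<gamma> (np p) = b * of_int m" by blast
  qed
  have bij0: "bij_betw \<Phi> (Hs 0) (hp (1/2))" using Phi_bij[of 0] by simp
  have bij1: "bij_betw \<Phi> (Hs 1) (hp (3/2))" using Phi_bij[of 1] by simp
  have hp0: "z \<in> hp s \<Longrightarrow> z 0 = 0" for z s unfolding hp_def by simp
  have A5: "Iso \<Phi> \<gamma> \<noteq> {}"
  proof -
    define z where "z n = (if n = 0 then 0 else complex_of_real (sqrt (\<gamma> n)))" for n
    have "summable (\<lambda>n. (real n) powr (2 * (1/2)) * (cmod (z n))\<^sup>2)"
    proof (rule summable_cong[THEN iffD1, OF _ summ])
      show "\<forall>\<^sub>F n in sequentially. real n * \<gamma> n = (real n) powr (2 * (1/2)) * (cmod (z n))\<^sup>2"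
        using \<gamma>nn by (auto simp: z_def)
    qed
    hence "z \<in> hp (1/2)" unfolding hp_def z_def by simp
    then obtain u where u: "u \<in> Hs 0" "\<Phi> u = z" using bij0 by (metis bij_betw_imp_surj_on imageE)
    have "u \<in> Iso \<Phi> \<gamma>" unfolding Iso_def actions_def using u \<gamma>nn by (auto simp: z_def)
    thus ?thesis by blast
  qed
  have A6: "u0 \<notin> Hs 1 \<and> (\<forall>t. S (t + 2 * pi / b) u0 = S t u0) \<and> \<not> finite_gap \<Phi> u0"
    if u0: "u0 \<in> Iso \<Phi> \<gamma>" for u0
  proof -
    have u0H: "u0 \<in> Hs 0" and act: "\<And>n. n \<ge> 1 \<Longrightarrow> (cmod (\<Phi> u0 n))^2 = \<gamma> n"
      using u0 unfolding Iso_def actions_def by auto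
    have Phi0: "\<Phi> u0 \<in> hp (1/2)" using bij0 u0H by (metis bij_betw_apply)
    have actf: "actions \<Phi> u0 = \<gamma>"
    proof
      fix n show "actions \<Phi> u0 n = \<gamma> n"
      proof (cases "n = 0")
        case True thus ?thesis using hp0[OF Phi0] \<gamma>0 by (simp add: actions_def)
      qed (use act in \<open>auto simp: actions_def\<close>)
    qed
    have notH1: "u0 \<notin> Hs 1"
    proof
      assume "u0 \<in> Hs 1"
      hence "\<Phi> u0 \<in> hp (3/2)" using bij1 by (metis bij_betw_apply)
      hence s3: "summable (\<lambda>n. (real n) powr 3 * (cmod (\<Phi> u0 n))\<^sup>2)" unfolding hp_def by simp
      have "summable (\<lambda>n. (real n)^3 * \<gamma> n)"
      proof (rule summable_cong[THEN iffD1, OF _ s3])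
        show "\<forall>\<^sub>F n in sequentially. (real n) powr 3 * (cmod (\<Phi> u0 n))\<^sup>2 = (real n)^3 * \<gamma> n"
        proof (rule always_eventually, rule allI)
          fix n show "(real n) powr 3 * (cmod (\<Phi> u0 n))\<^sup>2 = (real n)^3 * \<gamma> n"
          proof (cases "n = 0")
            case False thus ?thesis using act[of n] by simp
          qed simp
        qed
      qed
      hence "(\<lambda>n. (real n)^3 * \<gamma> n) summable_on UNIV"
        using \<gamma>nn by (intro summable_nonneg_imp_summable_on) auto
      hence "(\<lambda>n. (real n)^3 * \<gamma> n) summable_on (np ` {1..})"
        by (rule summable_on_subset_banach) simp
      hence "((\<lambda>n. (real n)^3 * \<gamma> n) \<circ> np) summable_on {1..}"
        by (subst (asm) summable_on_reindex[OF npinj])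
      thus False using A3 by (simp add: o_def)
    qed
    have per: "S (t + 2 * pi / b) u0 = S t u0" for t
    proof -
      have inj0: "inj_on \<Phi> (Hs 0)" using bij0 by (rule bij_betw_imp_inj_on)
      have in1: "S (t + 2 * pi / b) u0 \<in> Hs 0" "S t u0 \<in> Hs 0" using S_wp[of 0] u0H by auto
      have "\<Phi> (S (t + 2 * pi / b) u0) = \<Phi> (S t u0)"
      proof
        fix n
        show "\<Phi> (S (t + 2 * pi / b) u0) n = \<Phi> (S t u0) n"
        proof (cases "n = 0")
          case True
          have "\<Phi> (S (t + 2 * pi / b) u0) \<in> hp (1/2)" "\<Phi> (S t u0) \<in> hp (1/2)"
            using in1 bij0 by (metis bij_betw_apply)+
          thus ?thesis using True hp0 by metis
        next
          case False
          hence n1: "n \<ge> 1" by simp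
          show ?thesis
          proof (cases "\<Phi> u0 n = 0")
            case True thus ?thesis using S_Phi[of 0 u0 n] u0H n1 by simp
          next
            case nz: False
            have "\<gamma> n \<noteq> 0" using act[OF n1] nz by (metis norm_eq_zero zero_eq_power2)
            hence "n \<in> np ` {1..}" using A2 n1 by blast
            then obtain p where p: "p \<ge> 1" "n = np p" by auto
            obtain m :: int where m: "omega \<gamma> n = b * of_int m" using A4 p by blast
            have "omega \<gamma> n * (t + 2 * pi / b) = omega \<gamma> n * t + of_int m * (2 * pi)"
              using m b_pos by (simp add: field_simps)
            hence "exp (\<i> * complex_of_real (omega \<gamma> n * (t + 2 * pi / b)))
                 = exp (\<i> * complex_of_real (omega \<gamma> n * t) + \<i> * (of_int m * (of_real pi * 2)))"
              by (simp add: algebra_simps)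
            also have "\<dots> = exp (\<i> * complex_of_real (omega \<gamma> n * t))" by (rule exp_plus_2pin)
            finally show ?thesis using S_Phi[of 0 u0 n] u0H n1 actf by simp
          qed
        qed
      qed
      thus ?thesis using inj0 in1 by (meson inj_onD)
    qed
    have nfg: "\<not> finite_gap \<Phi> u0"
    proof
      assume "finite_gap \<Phi> u0"
      then obtain M where M: "\<And>n. n \<ge> M \<Longrightarrow> \<Phi> u0 n = 0" unfolding finite_gap_def by blast
      have "N M \<ge> M" by (rule Nid)
      hence "\<Phi> u0 (N M) = 0" by (rule M)
      moreover have "(cmod (\<Phi> u0 (N M)))^2 = G M" using act[OF Nge[of M]] \<gamma>N by simp
      ultimately show False using Gpos[of M] by simp
    qed
    show ?thesis using notH1 per nfg by blast
  qed
  show ?thesis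
    apply (rule exI[of _ np], rule exI[of _ \<gamma>])
    using npsm A1 A2 summ A3 A4 A5 A6 by blast
qed

end
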